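(* Let $\mathbb{F}$ be an algebraically closed field of characteristic $2$. Let $A_1,\dots,A_4,B_1,\dots,B_4\in M(2)$ satisfy the Standing Hypothesis, and suppose $A_1=\begin{pmatrix}a_1&1\\0&a_1\end{pmatrix}$ and $B_1=\begin{pmatrix}b_1&1\\0&b_1\end{pmatrix}$ for some $a_1,b_1\in\mathbb{F}$. Then $\mathrm{tr}(A_1A_2A_3A_4)=\mathrm{tr}(B_1B_2B_3B_4)$.
   Context: $M(2)$ is the space of $2\times 2$ matrices over $\mathbb{F}$. Standing Hypothesis: $\mathrm{tr}(A_i)=\mathrm{tr}(B_i)$ and $\det(A_i)=\det(B_i)$ for $1\le i\le 4$; $\mathrm{tr}(A_iA_j)=\mathrm{tr}(B_iB_j)$ for $1\le i<j\le 4$; $\mathrm{tr}(A_iA_jA_k)=\mathrm{tr}(B_iB_jB_k)$ for $1\le i<j<k\le 4$. *)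

theory Defs
  imports "HOL-Analysis.Analysis" "HOL-Computational_Algebra.Polynomial"
begin

definition jblock :: "'a::field \<Rightarrow> 'a^2^2" where
  "jblock c = (\<chi> i j. if i = j then c else if i = 1 \<and> j = 2 then 1 else 0)"

end

theory Submission
  imports Defs
begin

lemma mm2: "((M::'a::comm_ring_1^2^2) ** N)$i$j = M$i$1*N$1$j + M$i$2*N$2$j"
  by (simp add: matrix_matrix_mult_def sum_2)

lemma tr2: "trace (M::'a::comm_ring_1^2^2) = M$1$1 + M$2$2"
  by (simp add: trace_def sum_2)

lemma jb: "jblock c $1$1 = c" "jblock c $1$2 = 1" "jblock c $2$1 = 0" "jblock c $2$2 = c"
  by (simp_all add: jblock_def)

lemma trJ1: "trace (jblock c ** (X::'a::field^2^2)) = c * trace X + X$2$1"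
  by (simp add: tr2 mm2 jb algebra_simps)

lemma trJ2: "trace (jblock c ** (X::'a::field^2^2) ** Y) = c * trace (X ** Y) + (X**Y)$2$1"
  by (simp add: tr2 mm2 jb algebra_simps)

lemma trJ3: "trace (jblock c ** (X::'a::field^2^2) ** Y ** Z) = c * trace (X ** Y ** Z) + (X**Y**Z)$2$1"
  for Y Z :: "'a::field^2^2"
  by (simp add: tr2 mm2 jb algebra_simps)

lemma idX: "X$2$1 * (X**Y**Z)$2$1 = (X**Y)$2$1 * (X**Z)$2$1
   + Z$2$1 * (X$2$1 * trace (X**Y) - trace X * (X**Y)$2$1 + det X * Y$2$1)"
  for X Y Z :: "'a::comm_ring_1^2^2"
  by (simp add: tr2 mm2 det_2 algebra_simps)

lemma idY: "Y$2$1 * (X**Y**Z)$2$1 = (X**Y)$2$1 * (Y**Z)$2$1 - X$2$1 * Z$2$1 * det Y"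
  for X Y Z :: "'a::comm_ring_1^2^2"
  by (simp add: tr2 mm2 det_2 algebra_simps)

lemma idZ: "Z$2$1 * (X**Y**Z)$2$1 = X$2$1 * (Z$2$1 * trace (Y**Z) + Y$2$1 * det Z) + (Y**Z)$2$1 * ((X**Z)$2$1 - X$2$1 * trace Z)"
  for X Y Z :: "'a::comm_ring_1^2^2"
  by (simp add: tr2 mm2 det_2 algebra_simps)

lemma id0: "X$2$1 = 0 \<Longrightarrow> Y$2$1 = 0 \<Longrightarrow> Z$2$1 = 0 \<Longrightarrow> (X**Y**Z)$2$1 = 0"
  for X Y Z :: "'a::comm_ring_1^2^2"
  by (simp add: mm2)

theorem lemma7:
  fixes A B :: "nat \<Rightarrow> 'a::alg_closed_field^2^2" and a1 b1 :: 'a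
  assumes char2: "CHAR('a) = 2"
    and tr1: "\<forall>i\<in>{1..4}. trace (A i) = trace (B i)"
    and det1: "\<forall>i\<in>{1..4}. det (A i) = det (B i)"
    and tr2: "\<forall>i\<in>{1..4}. \<forall>j\<in>{1..4}. i < j \<longrightarrow> trace (A i ** A j) = trace (B i ** B j)"
    and tr3: "\<forall>i\<in>{1..4}. \<forall>j\<in>{1..4}. \<forall>k\<in>{1..4}. i < j \<and> j < k \<longrightarrow>
               trace (A i ** A j ** A k) = trace (B i ** B j ** B k)"
    and A1: "A 1 = jblock a1"
    and B1: "B 1 = jblock b1"
  shows "trace (A 1 ** A 2 ** A 3 ** A 4) = trace (B 1 ** B 2 ** B 3 ** B 4)"
proof -
  have two: "(2::'a) = 0" using of_nat_CHAR[where 'a='a] char2 by simp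
  have "det (A 1) = det (B 1)" using det1 by simp
  hence "a1 * a1 = b1 * b1" using A1 B1 by (simp add: det_2 jb)
  hence "(a1 - b1) * (a1 - b1) = 0"
    by (simp add: algebra_simps) (metis mult_2 two add_0 mult_zero_left)
  hence ab: "a1 = b1" by simp
  define X where "X = A 2" define Y where "Y = A 3" define Z where "Z = A 4"
  define X' where "X' = B 2" define Y' where "Y' = B 3" define Z' where "Z' = B 4"
  have T1: "trace (A i) = trace (B i)" if "i \<in> {2,3,4}" for i
    using tr1 that by auto
  have T2: "trace (A 1 ** A i) = trace (B 1 ** B i)" if "i \<in> {2,3,4}" for i
    using tr2 that by auto
  have T3: "trace (A 1 ** A i ** A j) = trace (B 1 ** B i ** B j)" if "(i,j) \<in> {(2,3),(2,4),(3,4)}" for i j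
    using tr3 that by auto
  have E: "A i $2$1 = B i $2$1" if "i \<in> {2,3,4}" for i
    using T1[OF that] T2[OF that] unfolding A1 B1 trJ1 ab by simp
  have Q: "(A i ** A j) $2$1 = (B i ** B j) $2$1" if "(i,j) \<in> {(2,3),(2,4),(3,4)}" for i j
  proof -
    have "trace (A i ** A j) = trace (B i ** B j)" using tr2 that by auto
    thus ?thesis using T3[OF that] unfolding A1 B1 trJ2 ab by simp
  qed
  have e: "X$2$1 = X'$2$1" "Y$2$1 = Y'$2$1" "Z$2$1 = Z'$2$1"
    using E by (auto simp: X_def Y_def Z_def X'_def Y'_def Z'_def)
  have q: "(X**Y)$2$1 = (X'**Y')$2$1" "(X**Z)$2$1 = (X'**Z')$2$1" "(Y**Z)$2$1 = (Y'**Z')$2$1"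
    using Q by (auto simp: X_def Y_def Z_def X'_def Y'_def Z'_def)
  have p: "trace (X**Y) = trace (X'**Y')" "trace (Y**Z) = trace (Y'**Z')"
    using tr2 by (auto simp: X_def Y_def Z_def X'_def Y'_def Z'_def)
  have t: "trace X = trace X'" "trace Z = trace Z'"
    using tr1 by (auto simp: X_def Z_def X'_def Z'_def)
  have d: "det X = det X'" "det Y = det Y'" "det Z = det Z'"
    using det1 by (auto simp: X_def Y_def Z_def X'_def Y'_def Z'_def)
  have t3: "trace (X**Y**Z) = trace (X'**Y'**Z')"
    using tr3 by (auto simp: X_def Y_def Z_def X'_def Y'_def Z'_def)
  have f: "(X**Y**Z)$2$1 = (X'**Y'**Z')$2$1"
  proof (cases "X$2$1 = 0")
    case False
    have "X$2$1 * (X**Y**Z)$2$1 = X$2$1 * (X'**Y'**Z')$2$1"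
      using idX[of X Y Z] idX[of X' Y' Z'] e q p t d by simp
    thus ?thesis using False by simp
  next
    case x0: True
    show ?thesis
    proof (cases "Y$2$1 = 0")
      case False
      have "Y$2$1 * (X**Y**Z)$2$1 = Y$2$1 * (X'**Y'**Z')$2$1"
        using idY[of Y X Z] idY[of Y' X' Z'] e q p t d by simp
      thus ?thesis using False by simp
    next
      case y0: True
      show ?thesis
      proof (cases "Z$2$1 = 0")
        case False
        have "Z$2$1 * (X**Y**Z)$2$1 = Z$2$1 * (X'**Y'**Z')$2$1"
          using idZ[of Z X Y] idZ[of Z' X' Y'] e q p t d by simp
        thus ?thesis using False by simp
      next
        case True
        thus ?thesis using id0[of X Y Z] id0[of X' Y' Z'] x0 y0 e by simp
      qed
    qed
  qed
  show ?thesis unfolding A1 B1 trJ3 ab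
    using f t3 by (simp add: X_def Y_def Z_def X'_def Y'_def Z'_def)
qed

end
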